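(* Let $\mathbb{C}$ be a regular majority category. For any regular epimorphism $f:X\to Y$ in $\mathbb{C}$ and any reflexive relations $R,S$ on $X$, $f(R\cap S)=f(R)\cap f(S)$.
   Context: A category is regular if it has finite limits and coequalizers of kernel pairs and regular epimorphisms are pullback-stable; morphisms factor as regular epi followed by mono. A relation on $X$ is a subobject of $X\times X$, reflexive if the diagonal factors through it; $\cap$ is intersection (pullback) of subobjects. $f(R)$ denotes the image of $R$ under $f\times f$ (mono part of the regular epi–mono factorization of $(f\times f)r$ for $r$ representing $R$). For $w:S\to W$ and subobject $A$ of $W$, $w\in_S A$ means $w$ factors through a representative of $A$. A ternary relation $R\leqslant X\times Y\times Z$ is majority-selecting if for all $S$ and $x,x':S\to X$, $y,y':S\to Y$, $z,z':S\to Z$: $(x,y,z')\in_S R$, $(x,y',z)\in_S R$, $(x',y,z)\in_S R$ imply $(x,y,z)\in_S R$. A category with products is a majority category if all its ternary relations are majority-selecting. *)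

theory Defs
  imports Main
begin

(* A category presented by its objects, arrows, domain, codomain, identities
   and composition.  Comp C g f is "g after f". *)
record ('o, 'a) category =
  Obj  :: "'o set"
  Arr  :: "'a set"
  Dom  :: "'a \<Rightarrow> 'o"
  Cod  :: "'a \<Rightarrow> 'o"
  Id   :: "'o \<Rightarrow> 'a"
  Comp :: "'a \<Rightarrow> 'a \<Rightarrow> 'a"

definition hom :: "('o, 'a) category \<Rightarrow> 'o \<Rightarrow> 'o \<Rightarrow> 'a set" where
  "hom C X Y = {f \<in> Arr C. Dom C f = X \<and> Cod C f = Y}"

definition is_category :: "('o, 'a) category \<Rightarrow> bool" where
  "is_category C \<longleftrightarrow>
     (\<forall>f\<in>Arr C. Dom C f \<in> Obj C \<and> Cod C f \<in> Obj C) \<and>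
     (\<forall>X\<in>Obj C. Id C X \<in> hom C X X) \<and>
     (\<forall>f g. f \<in> Arr C \<and> g \<in> Arr C \<and> Cod C f = Dom C g
        \<longrightarrow> Comp C g f \<in> hom C (Dom C f) (Cod C g)) \<and>
     (\<forall>f\<in>Arr C. Comp C f (Id C (Dom C f)) = f \<and> Comp C (Id C (Cod C f)) f = f) \<and>
     (\<forall>f g h. f \<in> Arr C \<and> g \<in> Arr C \<and> h \<in> Arr C \<and> Cod C f = Dom C g \<and> Cod C g = Dom C h
        \<longrightarrow> Comp C h (Comp C g f) = Comp C (Comp C h g) f)"

definition mono :: "('o, 'a) category \<Rightarrow> 'a \<Rightarrow> bool" where
  "mono C m \<longleftrightarrow> m \<in> Arr C \<and>
     (\<forall>g h. g \<in> Arr C \<and> h \<in> Arr C \<and> Dom C g = Dom C h \<and> Cod C g = Dom C m \<and> Cod C h = Dom C m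
        \<and> Comp C m g = Comp C m h \<longrightarrow> g = h)"

definition is_terminal :: "('o, 'a) category \<Rightarrow> 'o \<Rightarrow> bool" where
  "is_terminal C T \<longleftrightarrow> T \<in> Obj C \<and> (\<forall>X\<in>Obj C. \<exists>!u. u \<in> hom C X T)"

definition is_pullback :: "('o, 'a) category \<Rightarrow> 'a \<Rightarrow> 'a \<Rightarrow> 'a \<Rightarrow> 'a \<Rightarrow> bool" where
  "is_pullback C f g p q \<longleftrightarrow>
     f \<in> Arr C \<and> g \<in> Arr C \<and> p \<in> Arr C \<and> q \<in> Arr C \<and>
     Cod C f = Cod C g \<and> Dom C p = Dom C q \<and> Cod C p = Dom C f \<and> Cod C q = Dom C g \<and>
     Comp C f p = Comp C g q \<and>
     (\<forall>x y. x \<in> Arr C \<and> y \<in> Arr C \<and> Dom C x = Dom C y \<and> Cod C x = Dom C f \<and> Cod C y = Dom C g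
        \<and> Comp C f x = Comp C g y
        \<longrightarrow> (\<exists>!u. u \<in> hom C (Dom C x) (Dom C p) \<and> Comp C p u = x \<and> Comp C q u = y))"

definition has_finite_limits :: "('o, 'a) category \<Rightarrow> bool" where
  "has_finite_limits C \<longleftrightarrow> (\<exists>T. is_terminal C T) \<and>
     (\<forall>f g. f \<in> Arr C \<and> g \<in> Arr C \<and> Cod C f = Cod C g \<longrightarrow> (\<exists>p q. is_pullback C f g p q))"

definition is_coequalizer :: "('o, 'a) category \<Rightarrow> 'a \<Rightarrow> 'a \<Rightarrow> 'a \<Rightarrow> bool" where
  "is_coequalizer C a b e \<longleftrightarrow>
     a \<in> Arr C \<and> b \<in> Arr C \<and> e \<in> Arr C \<and> Dom C a = Dom C b \<and> Cod C a = Cod C b \<and>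
     Dom C e = Cod C a \<and> Comp C e a = Comp C e b \<and>
     (\<forall>h. h \<in> Arr C \<and> Dom C h = Cod C a \<and> Comp C h a = Comp C h b
        \<longrightarrow> (\<exists>!u. u \<in> hom C (Cod C e) (Cod C h) \<and> Comp C u e = h))"

definition regular_epi :: "('o, 'a) category \<Rightarrow> 'a \<Rightarrow> bool" where
  "regular_epi C e \<longleftrightarrow> (\<exists>a b. is_coequalizer C a b e)"

(* the kernel pair (p,q) of f is a pullback of f along itself *)
definition has_coequalizers_of_kernel_pairs :: "('o, 'a) category \<Rightarrow> bool" where
  "has_coequalizers_of_kernel_pairs C \<longleftrightarrow>
     (\<forall>f p q. is_pullback C f f p q \<longrightarrow> (\<exists>e. is_coequalizer C p q e))"

(* in a pullback square f o p = g o q, q is the pullback of f along g *)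
definition regular_epis_pullback_stable :: "('o, 'a) category \<Rightarrow> bool" where
  "regular_epis_pullback_stable C \<longleftrightarrow>
     (\<forall>f g p q. is_pullback C f g p q \<and> regular_epi C f \<longrightarrow> regular_epi C q)"

definition regular_category :: "('o, 'a) category \<Rightarrow> bool" where
  "regular_category C \<longleftrightarrow> is_category C \<and> has_finite_limits C \<and>
     has_coequalizers_of_kernel_pairs C \<and> regular_epis_pullback_stable C"

definition is_product :: "('o, 'a) category \<Rightarrow> 'o \<Rightarrow> 'o \<Rightarrow> 'o \<Rightarrow> 'a \<Rightarrow> 'a \<Rightarrow> bool" where
  "is_product C X Y P p1 p2 \<longleftrightarrow> X \<in> Obj C \<and> Y \<in> Obj C \<and> P \<in> Obj C \<and>
     p1 \<in> hom C P X \<and> p2 \<in> hom C P Y \<and>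
     (\<forall>T x y. x \<in> hom C T X \<and> y \<in> hom C T Y
        \<longrightarrow> (\<exists>!u. u \<in> hom C T P \<and> Comp C p1 u = x \<and> Comp C p2 u = y))"

definition is_product3 :: "('o, 'a) category \<Rightarrow> 'o \<Rightarrow> 'o \<Rightarrow> 'o \<Rightarrow> 'o \<Rightarrow> 'a \<Rightarrow> 'a \<Rightarrow> 'a \<Rightarrow> bool" where
  "is_product3 C X Y Z P p1 p2 p3 \<longleftrightarrow> X \<in> Obj C \<and> Y \<in> Obj C \<and> Z \<in> Obj C \<and> P \<in> Obj C \<and>
     p1 \<in> hom C P X \<and> p2 \<in> hom C P Y \<and> p3 \<in> hom C P Z \<and>
     (\<forall>T x y z. x \<in> hom C T X \<and> y \<in> hom C T Y \<and> z \<in> hom C T Z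
        \<longrightarrow> (\<exists>!u. u \<in> hom C T P \<and> Comp C p1 u = x \<and> Comp C p2 u = y \<and> Comp C p3 u = z))"

definition has_binary_products :: "('o, 'a) category \<Rightarrow> bool" where
  "has_binary_products C \<longleftrightarrow>
     (\<forall>X\<in>Obj C. \<forall>Y\<in>Obj C. \<exists>P p1 p2. is_product C X Y P p1 p2)"

(* (x,y,z) \<in>_S R, for the ternary relation represented by the mono r into the
   product (P,p1,p2,p3) and generalized elements x,y,z with domain S *)
definition gen_mem3 :: "('o, 'a) category \<Rightarrow> 'a \<Rightarrow> 'a \<Rightarrow> 'a \<Rightarrow> 'a \<Rightarrow> 'a \<Rightarrow> 'a \<Rightarrow> 'a \<Rightarrow> bool" where
  "gen_mem3 C p1 p2 p3 r x y z \<longleftrightarrow>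
     (\<exists>u. u \<in> hom C (Dom C x) (Dom C r) \<and> Comp C p1 (Comp C r u) = x \<and>
          Comp C p2 (Comp C r u) = y \<and> Comp C p3 (Comp C r u) = z)"

definition majority_selecting ::
  "('o, 'a) category \<Rightarrow> 'o \<Rightarrow> 'o \<Rightarrow> 'o \<Rightarrow> 'a \<Rightarrow> 'a \<Rightarrow> 'a \<Rightarrow> 'a \<Rightarrow> bool" where
  "majority_selecting C X Y Z p1 p2 p3 r \<longleftrightarrow>
     (\<forall>S x x' y y' z z'. x \<in> hom C S X \<and> x' \<in> hom C S X \<and> y \<in> hom C S Y \<and> y' \<in> hom C S Y \<and>
        z \<in> hom C S Z \<and> z' \<in> hom C S Z \<and>
        gen_mem3 C p1 p2 p3 r x y z' \<and> gen_mem3 C p1 p2 p3 r x y' z \<and> gen_mem3 C p1 p2 p3 r x' y z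
        \<longrightarrow> gen_mem3 C p1 p2 p3 r x y z)"

definition majority_category :: "('o, 'a) category \<Rightarrow> bool" where
  "majority_category C \<longleftrightarrow> has_binary_products C \<and>
     (\<forall>X Y Z P p1 p2 p3 r. is_product3 C X Y Z P p1 p2 p3 \<and> mono C r \<and> Cod C r = P
        \<longrightarrow> majority_selecting C X Y Z p1 p2 p3 r)"

definition sub_le :: "('o, 'a) category \<Rightarrow> 'a \<Rightarrow> 'a \<Rightarrow> bool" where
  "sub_le C m n \<longleftrightarrow> m \<in> Arr C \<and> n \<in> Arr C \<and> Cod C m = Cod C n \<and>
     (\<exists>u. u \<in> hom C (Dom C m) (Dom C n) \<and> Comp C n u = m)"

definition sub_eq :: "('o, 'a) category \<Rightarrow> 'a \<Rightarrow> 'a \<Rightarrow> bool" where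
  "sub_eq C m n \<longleftrightarrow> sub_le C m n \<and> sub_le C n m"

definition is_image :: "('o, 'a) category \<Rightarrow> 'a \<Rightarrow> 'a \<Rightarrow> bool" where
  "is_image C g m \<longleftrightarrow> mono C m \<and>
     (\<exists>e. regular_epi C e \<and> Dom C e = Dom C g \<and> Cod C e = Dom C m \<and> Comp C m e = g)"

definition reflexive_rel :: "('o, 'a) category \<Rightarrow> 'o \<Rightarrow> 'o \<Rightarrow> 'a \<Rightarrow> 'a \<Rightarrow> 'a \<Rightarrow> bool" where
  "reflexive_rel C X P p1 p2 r \<longleftrightarrow>
     (\<forall>d. d \<in> hom C X P \<and> Comp C p1 d = Id C X \<and> Comp C p2 d = Id C X
        \<longrightarrow> (\<exists>u. u \<in> hom C X (Dom C r) \<and> Comp C r u = d))"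

end

theory Submission
  imports Defs
begin


locale rcat =
  fixes C :: "('o,'a) category"
  assumes cat: "is_category C"
begin

abbreviation cmp (infixr "\<cdot>" 55) where "g \<cdot> f \<equiv> Comp C g f"

lemma homI: "f \<in> Arr C \<Longrightarrow> Dom C f = A \<Longrightarrow> Cod C f = B \<Longrightarrow> f \<in> hom C A B"
  by (simp add: hom_def)
lemma homD: "f \<in> hom C A B \<Longrightarrow> f \<in> Arr C \<and> Dom C f = A \<and> Cod C f = B"
  by (simp add: hom_def)
lemma hom_arr: "f \<in> hom C A B \<Longrightarrow> f \<in> Arr C" by (simp add: hom_def)
lemma hom_dom: "f \<in> hom C A B \<Longrightarrow> Dom C f = A" by (simp add: hom_def)
lemma hom_cod: "f \<in> hom C A B \<Longrightarrow> Cod C f = B" by (simp add: hom_def)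
lemma arr_hom: "f \<in> Arr C \<Longrightarrow> f \<in> hom C (Dom C f) (Cod C f)" by (simp add: hom_def)

lemma comp_hom: "f \<in> hom C A B \<Longrightarrow> g \<in> hom C B D \<Longrightarrow> g \<cdot> f \<in> hom C A D"
  using cat unfolding is_category_def hom_def by auto

lemma arr_comp[simp]: "f \<in> Arr C \<Longrightarrow> g \<in> Arr C \<Longrightarrow> Cod C f = Dom C g \<Longrightarrow> g \<cdot> f \<in> Arr C"
  using cat unfolding is_category_def hom_def by auto
lemma dom_comp[simp]: "f \<in> Arr C \<Longrightarrow> g \<in> Arr C \<Longrightarrow> Cod C f = Dom C g \<Longrightarrow> Dom C (g \<cdot> f) = Dom C f"
  using cat unfolding is_category_def hom_def by auto
lemma cod_comp[simp]: "f \<in> Arr C \<Longrightarrow> g \<in> Arr C \<Longrightarrow> Cod C f = Dom C g \<Longrightarrow> Cod C (g \<cdot> f) = Cod C g"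
  using cat unfolding is_category_def hom_def by auto
lemma assoc: "f \<in> Arr C \<Longrightarrow> g \<in> Arr C \<Longrightarrow> h \<in> Arr C \<Longrightarrow> Cod C f = Dom C g \<Longrightarrow> Cod C g = Dom C h
   \<Longrightarrow> (h \<cdot> g) \<cdot> f = h \<cdot> (g \<cdot> f)"
  using cat unfolding is_category_def by metis
lemma assoc_hom: "f \<in> hom C A B \<Longrightarrow> g \<in> hom C B D \<Longrightarrow> h \<in> hom C D E
   \<Longrightarrow> (h \<cdot> g) \<cdot> f = h \<cdot> (g \<cdot> f)"
  using assoc by (simp add: hom_def)
lemma obj_dom: "f \<in> Arr C \<Longrightarrow> Dom C f \<in> Obj C"
  using cat unfolding is_category_def by auto
lemma obj_cod: "f \<in> Arr C \<Longrightarrow> Cod C f \<in> Obj C"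
  using cat unfolding is_category_def by auto
lemma id_hom: "X \<in> Obj C \<Longrightarrow> Id C X \<in> hom C X X"
  using cat unfolding is_category_def by auto
lemma id_right: "f \<in> hom C A B \<Longrightarrow> f \<cdot> Id C A = f"
  using cat unfolding is_category_def hom_def by auto
lemma id_left: "f \<in> hom C A B \<Longrightarrow> Id C B \<cdot> f = f"
  using cat unfolding is_category_def hom_def by auto

lemma monoD: "mono C m \<Longrightarrow> g \<in> hom C T (Dom C m) \<Longrightarrow> h \<in> hom C T (Dom C m) \<Longrightarrow> m \<cdot> g = m \<cdot> h \<Longrightarrow> g = h"
  unfolding mono_def hom_def by auto

lemma regular_epi_arr: "regular_epi C e \<Longrightarrow> e \<in> Arr C"
  unfolding regular_epi_def is_coequalizer_def by auto

lemma regular_epi_epi: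
  assumes "regular_epi C e" "h1 \<in> hom C (Cod C e) D" "h2 \<in> hom C (Cod C e) D" "h1 \<cdot> e = h2 \<cdot> e"
  shows "h1 = h2"
proof -
  obtain a b where co: "is_coequalizer C a b e" using assms(1) unfolding regular_epi_def by auto
  have a: "a \<in> Arr C" "b \<in> Arr C" "e \<in> Arr C" "Dom C e = Cod C a" "Cod C a = Cod C b" "e \<cdot> a = e \<cdot> b"
    using co unfolding is_coequalizer_def by auto
  have u: "\<forall>h. h \<in> Arr C \<and> Dom C h = Cod C a \<and> h \<cdot> a = h \<cdot> b
        \<longrightarrow> (\<exists>!u. u \<in> hom C (Cod C e) (Cod C h) \<and> u \<cdot> e = h)"
    using co unfolding is_coequalizer_def by auto
  let ?h = "h1 \<cdot> e"
  have h1: "h1 \<in> Arr C" "Dom C h1 = Cod C e" "Cod C h1 = D" using assms(2) by (auto simp: hom_def)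
  have ha: "?h \<cdot> a = ?h \<cdot> b"
    using a h1 by (simp add: assoc)
  have "?h \<in> Arr C" "Dom C ?h = Cod C a" "Cod C ?h = D" using a h1 by auto
  then have "\<exists>!u. u \<in> hom C (Cod C e) D \<and> u \<cdot> e = ?h" using u ha by force
  then show ?thesis using assms by auto
qed


end


context rcat begin
lemma pbD: "is_pullback C f g p q \<Longrightarrow> f \<in> Arr C \<and> g \<in> Arr C \<and> p \<in> hom C (Dom C p) (Dom C f) \<and>
   q \<in> hom C (Dom C p) (Dom C g) \<and> Cod C f = Cod C g \<and> f \<cdot> p = g \<cdot> q"
  unfolding is_pullback_def hom_def by auto

lemma ex1_uniq: "\<exists>!x. P x \<Longrightarrow> P a \<Longrightarrow> P b \<Longrightarrow> a = b" by blast

lemma pb_univ: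
  assumes "is_pullback C f g p q" "x \<in> hom C T (Dom C f)" "y \<in> hom C T (Dom C g)" "f \<cdot> x = g \<cdot> y"
  shows "\<exists>!k. k \<in> hom C T (Dom C p) \<and> p \<cdot> k = x \<and> q \<cdot> k = y"
proof -
  have U: "\<forall>x y. x \<in> Arr C \<and> y \<in> Arr C \<and> Dom C x = Dom C y \<and> Cod C x = Dom C f \<and> Cod C y = Dom C g
        \<and> f \<cdot> x = g \<cdot> y
        \<longrightarrow> (\<exists>!u. u \<in> hom C (Dom C x) (Dom C p) \<and> p \<cdot> u = x \<and> q \<cdot> u = y)"
    using assms(1) unfolding is_pullback_def by blast
  have "x \<in> Arr C \<and> y \<in> Arr C \<and> Dom C x = Dom C y \<and> Cod C x = Dom C f \<and> Cod C y = Dom C g \<and> f \<cdot> x = g \<cdot> y"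
    using assms by (simp add: hom_def)
  then have "\<exists>!u. u \<in> hom C (Dom C x) (Dom C p) \<and> p \<cdot> u = x \<and> q \<cdot> u = y" using U by blast
  moreover have "Dom C x = T" using assms by (simp add: hom_def)
  ultimately show ?thesis by simp
qed

lemma pb_elem:
  assumes "is_pullback C f g p q" "x \<in> hom C T (Dom C f)" "y \<in> hom C T (Dom C g)" "f \<cdot> x = g \<cdot> y"
  shows "\<exists>k. k \<in> hom C T (Dom C p) \<and> p \<cdot> k = x \<and> q \<cdot> k = y"
  using pb_univ[OF assms] by blast

lemma pb_uniq:
  assumes "is_pullback C f g p q" "k \<in> hom C T (Dom C p)" "k' \<in> hom C T (Dom C p)"
    "p \<cdot> k = p \<cdot> k'" "q \<cdot> k = q \<cdot> k'"
  shows "k = k'"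
proof -
  have P: "f \<in> Arr C" "g \<in> Arr C" "p \<in> hom C (Dom C p) (Dom C f)" "q \<in> hom C (Dom C p) (Dom C g)"
    "Cod C f = Cod C g" "f \<cdot> p = g \<cdot> q" using pbD[OF assms(1)] by auto
  let ?x = "p \<cdot> k" and ?y = "q \<cdot> k"
  have x: "?x \<in> hom C T (Dom C f)" "?y \<in> hom C T (Dom C g)" using P assms comp_hom by blast+
  have e: "f \<cdot> ?x = g \<cdot> ?y" using P assms(2) by (simp add: hom_def flip: assoc)
  show ?thesis
    by (rule ex1_uniq[OF pb_univ[OF assms(1) x e]]) (use assms in auto)
qed

lemma prodD: "is_product C A B P p1 p2 \<Longrightarrow> p1 \<in> hom C P A \<and> p2 \<in> hom C P B \<and> A \<in> Obj C \<and> B \<in> Obj C \<and> P \<in> Obj C"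
  unfolding is_product_def by auto

lemma prod_pair:
  assumes "is_product C A B P p1 p2" "x \<in> hom C T A" "y \<in> hom C T B"
  shows "\<exists>u. u \<in> hom C T P \<and> p1 \<cdot> u = x \<and> p2 \<cdot> u = y"
  using assms unfolding is_product_def by blast

lemma prod_ext:
  assumes "is_product C A B P p1 p2" "u \<in> hom C T P" "u' \<in> hom C T P"
    "p1 \<cdot> u = p1 \<cdot> u'" "p2 \<cdot> u = p2 \<cdot> u'"
  shows "u = u'"
proof -
  have "p1 \<cdot> u \<in> hom C T A" "p2 \<cdot> u \<in> hom C T B" using assms prodD comp_hom by blast+
  then have "\<exists>!v. v \<in> hom C T P \<and> p1 \<cdot> v = p1 \<cdot> u \<and> p2 \<cdot> v = p2 \<cdot> u"
    using assms(1) unfolding is_product_def by blast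
  then show ?thesis using assms by auto
qed

lemma prod3D: "is_product3 C A B D P p1 p2 p3 \<Longrightarrow> p1 \<in> hom C P A \<and> p2 \<in> hom C P B \<and> p3 \<in> hom C P D"
  unfolding is_product3_def by auto

lemma prod3_tuple:
  assumes "is_product3 C A B D P p1 p2 p3" "x \<in> hom C T A" "y \<in> hom C T B" "z \<in> hom C T D"
  shows "\<exists>u. u \<in> hom C T P \<and> p1 \<cdot> u = x \<and> p2 \<cdot> u = y \<and> p3 \<cdot> u = z"
  using assms unfolding is_product3_def by blast

lemma prod3_from_binary:
  assumes "is_product C B D Q q1 q2" "is_product C A Q P p1 p2"
  shows "is_product3 C A B D P p1 (q1 \<cdot> p2) (q2 \<cdot> p2)"
proof -
  have Q: "q1 \<in> hom C Q B" "q2 \<in> hom C Q D" "B \<in> Obj C" "D \<in> Obj C" "Q \<in> Obj C" using prodD[OF assms(1)] by auto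
  have P: "p1 \<in> hom C P A" "p2 \<in> hom C P Q" "A \<in> Obj C" "P \<in> Obj C" using prodD[OF assms(2)] by auto
  show ?thesis unfolding is_product3_def
  proof (intro conjI allI impI)
    show "q1 \<cdot> p2 \<in> hom C P B" "q2 \<cdot> p2 \<in> hom C P D" using P Q comp_hom by blast+
    fix T x y z assume h: "x \<in> hom C T A \<and> y \<in> hom C T B \<and> z \<in> hom C T D"
    obtain v where v: "v \<in> hom C T Q" "q1 \<cdot> v = y" "q2 \<cdot> v = z" using prod_pair[OF assms(1)] h by blast
    obtain u where u: "u \<in> hom C T P" "p1 \<cdot> u = x" "p2 \<cdot> u = v" using prod_pair[OF assms(2)] h v by blast
    show "\<exists>!u. u \<in> hom C T P \<and> p1 \<cdot> u = x \<and> (q1 \<cdot> p2) \<cdot> u = y \<and> (q2 \<cdot> p2) \<cdot> u = z"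
    proof (rule ex1I[of _ u])
      show "u \<in> hom C T P \<and> p1 \<cdot> u = x \<and> (q1 \<cdot> p2) \<cdot> u = y \<and> (q2 \<cdot> p2) \<cdot> u = z"
        using u v P Q by (simp add: assoc_hom)
    next
      fix u' assume h': "u' \<in> hom C T P \<and> p1 \<cdot> u' = x \<and> (q1 \<cdot> p2) \<cdot> u' = y \<and> (q2 \<cdot> p2) \<cdot> u' = z"
      have h'': "u' \<in> hom C T P" "p1 \<cdot> u' = x" "(q1 \<cdot> p2) \<cdot> u' = y" "(q2 \<cdot> p2) \<cdot> u' = z" using h' by auto
      have "p2 \<cdot> u' = v"
        apply (rule prod_ext[OF assms(1)])
        using h' P Q v comp_hom apply blast
        using v apply blast
        using P Q v h'' by (simp_all add: hom_def assoc)
      then show "u' = u" using prod_ext[OF assms(2), of u' T u] h'' u by simp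
    qed
  qed (use P Q in auto)
qed

end



locale rc = rcat +
  assumes reg: "regular_category C"
begin

lemma pb_ex: "f \<in> Arr C \<Longrightarrow> g \<in> Arr C \<Longrightarrow> Cod C f = Cod C g \<Longrightarrow> \<exists>p q. is_pullback C f g p q"
  using reg unfolding regular_category_def has_finite_limits_def by blast

lemma cover:
  assumes "regular_epi C e" "w \<in> hom C T (Cod C e)"
  shows "\<exists>T' k t. t \<in> hom C T' T \<and> regular_epi C t \<and> k \<in> hom C T' (Dom C e) \<and> e \<cdot> k = w \<cdot> t"
proof -
  have "e \<in> Arr C" using assms regular_epi_arr by auto
  then obtain p q where pb: "is_pullback C e w p q" using pb_ex[of e w] assms by (auto simp: hom_def)
  have "regular_epi C q" using reg pb assms unfolding regular_category_def regular_epis_pullback_stable_def by blast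
  moreover have "q \<in> hom C (Dom C p) T" "p \<in> hom C (Dom C p) (Dom C e)" "e \<cdot> p = w \<cdot> q"
    using pbD[OF pb] assms hom_dom by auto
  ultimately show ?thesis by blast
qed

lemma descend:
  assumes "regular_epi C t" "t \<in> hom C T' T" "mono C n" "h \<in> hom C T (Cod C n)"
    "v \<in> hom C T' (Dom C n)" "n \<cdot> v = h \<cdot> t"
  shows "\<exists>v'. v' \<in> hom C T (Dom C n) \<and> n \<cdot> v' = h"
proof -
  obtain a b where co: "is_coequalizer C a b t" using assms(1) unfolding regular_epi_def by auto
  have a: "a \<in> hom C (Dom C a) T'" "b \<in> hom C (Dom C a) T'" "t \<cdot> a = t \<cdot> b"
    using co assms(2) unfolding is_coequalizer_def hom_def by auto
  have u: "\<forall>h. h \<in> Arr C \<and> Dom C h = Cod C a \<and> h \<cdot> a = h \<cdot> b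
        \<longrightarrow> (\<exists>!u. u \<in> hom C (Cod C t) (Cod C h) \<and> u \<cdot> t = h)"
    using co unfolding is_coequalizer_def by auto
  have n: "n \<in> hom C (Dom C n) (Cod C n)" using assms(3) unfolding mono_def hom_def by auto
  have "n \<cdot> (v \<cdot> a) = (n \<cdot> v) \<cdot> a" using assoc_hom[OF a(1) assms(5) n] by simp
  also have "\<dots> = h \<cdot> (t \<cdot> a)" using assoc_hom[OF a(1) assms(2,4)] assms(6) by simp
  also have "\<dots> = h \<cdot> (t \<cdot> b)" using a(3) by simp
  also have "\<dots> = (n \<cdot> v) \<cdot> b" using assoc_hom[OF a(2) assms(2,4)] assms(6) by simp
  also have "\<dots> = n \<cdot> (v \<cdot> b)" using assoc_hom[OF a(2) assms(5) n] by simp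
  finally have "n \<cdot> (v \<cdot> a) = n \<cdot> (v \<cdot> b)" .
  then have va: "v \<cdot> a = v \<cdot> b" using monoD[OF assms(3) comp_hom[OF a(1) assms(5)] comp_hom[OF a(2) assms(5)]] by blast
  have "v \<in> Arr C \<and> Dom C v = Cod C a \<and> v \<cdot> a = v \<cdot> b" using assms(5) a va by (simp add: hom_def)
  then have "\<exists>!w. w \<in> hom C (Cod C t) (Cod C v) \<and> w \<cdot> t = v" using u by blast
  moreover have "Cod C t = T" "Cod C v = Dom C n" using assms(2,5) by (simp_all add: hom_def)
  ultimately obtain w where w: "w \<in> hom C T (Dom C n)" "w \<cdot> t = v" by auto
  have "(n \<cdot> w) \<cdot> t = h \<cdot> t" using w assms n by (simp add: hom_def assoc)
  moreover have "n \<cdot> w \<in> hom C (Cod C t) (Cod C n)" using w n assms(2) comp_hom by (simp add: hom_def)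
  moreover have "h \<in> hom C (Cod C t) (Cod C n)" using assms(2,4) by (simp add: hom_def)
  ultimately have "n \<cdot> w = h" using regular_epi_epi[OF assms(1)] by blast
  then show ?thesis using w by blast
qed

lemma image_ex:
  assumes "g \<in> Arr C"
  shows "\<exists>m e. mono C m \<and> regular_epi C e \<and> e \<in> hom C (Dom C g) (Dom C m) \<and> Cod C m = Cod C g \<and> m \<cdot> e = g"
proof -
  obtain p q where pb: "is_pullback C g g p q" using pb_ex[OF assms assms] by blast
  obtain e where co: "is_coequalizer C p q e"
    using reg pb unfolding regular_category_def has_coequalizers_of_kernel_pairs_def by blast
  have P: "p \<in> hom C (Dom C p) (Dom C g)" "q \<in> hom C (Dom C p) (Dom C g)" "g \<cdot> p = g \<cdot> q"
    using pbD[OF pb] by auto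
  have E0: "e \<in> Arr C" "Dom C e = Cod C p" "e \<cdot> p = e \<cdot> q"
    using co unfolding is_coequalizer_def by blast+
  have E: "e \<in> hom C (Dom C g) (Cod C e)" "e \<cdot> p = e \<cdot> q"
    using E0 P(1) by (simp_all add: hom_def)
  have re: "regular_epi C e" unfolding regular_epi_def using co by blast
  have U: "\<forall>h. h \<in> Arr C \<and> Dom C h = Cod C p \<and> h \<cdot> p = h \<cdot> q
        \<longrightarrow> (\<exists>!u. u \<in> hom C (Cod C e) (Cod C h) \<and> u \<cdot> e = h)"
    using co unfolding is_coequalizer_def by blast
  have "g \<in> Arr C \<and> Dom C g = Cod C p \<and> g \<cdot> p = g \<cdot> q" using assms P by (simp add: hom_def)
  then have "\<exists>!u. u \<in> hom C (Cod C e) (Cod C g) \<and> u \<cdot> e = g" using U by blast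
  then obtain m where m: "m \<in> hom C (Cod C e) (Cod C g)" "m \<cdot> e = g" by blast
  have "mono C m" unfolding mono_def
  proof (intro conjI allI impI)
    show "m \<in> Arr C" using m hom_arr by blast
    fix g1 h1 assume H: "g1 \<in> Arr C \<and> h1 \<in> Arr C \<and> Dom C g1 = Dom C h1 \<and> Cod C g1 = Dom C m \<and> Cod C h1 = Dom C m \<and> m \<cdot> g1 = m \<cdot> h1"
    define Z where "Z = Dom C g1"
    have g1: "g1 \<in> hom C Z (Cod C e)" "h1 \<in> hom C Z (Cod C e)" using H m unfolding Z_def hom_def by auto
    obtain T1 k1 z1 where c1: "z1 \<in> hom C T1 Z" "regular_epi C z1" "k1 \<in> hom C T1 (Dom C e)" "e \<cdot> k1 = g1 \<cdot> z1"
      using cover[OF re g1(1)] by blast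
    have hz: "h1 \<cdot> z1 \<in> hom C T1 (Cod C e)" using comp_hom[OF c1(1) g1(2)] .
    obtain T2 k2 z2 where c2: "z2 \<in> hom C T2 T1" "regular_epi C z2" "k2 \<in> hom C T2 (Dom C e)" "e \<cdot> k2 = (h1 \<cdot> z1) \<cdot> z2"
      using cover[OF re hz] by blast
    have de: "Dom C e = Dom C g" using E hom_dom by blast
    have geq: "g \<cdot> (k1 \<cdot> z2) = g \<cdot> k2"
    proof -
      have k1': "k1 \<in> hom C T1 (Dom C e)" "k2 \<in> hom C T2 (Dom C e)" using c1 c2 by auto
      have "g \<cdot> (k1 \<cdot> z2) = (m \<cdot> e) \<cdot> (k1 \<cdot> z2)" using m by simp
      also have "\<dots> = m \<cdot> (e \<cdot> (k1 \<cdot> z2))" using m(1) E(1) k1' c2(1) de by (simp add: hom_def assoc)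
      also have "\<dots> = m \<cdot> ((e \<cdot> k1) \<cdot> z2)" using m(1) E(1) k1' c2(1) de by (simp add: hom_def assoc)
      also have "\<dots> = m \<cdot> ((g1 \<cdot> z1) \<cdot> z2)" using c1(4) by simp
      also have "\<dots> = (m \<cdot> g1) \<cdot> (z1 \<cdot> z2)" using m(1) g1 c1(1) c2(1) by (simp add: hom_def assoc)
      also have "\<dots> = (m \<cdot> h1) \<cdot> (z1 \<cdot> z2)" using H by simp
      also have "\<dots> = m \<cdot> ((h1 \<cdot> z1) \<cdot> z2)" using m(1) g1 c1(1) c2(1) by (simp add: hom_def assoc)
      also have "\<dots> = m \<cdot> (e \<cdot> k2)" using c2(4) by simp
      also have "\<dots> = (m \<cdot> e) \<cdot> k2" using m(1) E(1) k1' de by (simp add: hom_def assoc)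
      also have "\<dots> = g \<cdot> k2" using m by simp
      finally show ?thesis .
    qed
    then obtain k where k: "k \<in> hom C T2 (Dom C p)" "p \<cdot> k = k1 \<cdot> z2" "q \<cdot> k = k2"
    proof -
      have "k1 \<cdot> z2 \<in> hom C T2 (Dom C g)" using comp_hom[OF c2(1) c1(3)] de by simp
      moreover have "k2 \<in> hom C T2 (Dom C g)" using c2(3) de by simp
      ultimately show ?thesis using pb_elem[OF pb, of "k1 \<cdot> z2" T2 k2] geq that by blast
    qed
    have "(g1 \<cdot> z1) \<cdot> z2 = (h1 \<cdot> z1) \<cdot> z2"
    proof -
      have "(g1 \<cdot> z1) \<cdot> z2 = (e \<cdot> k1) \<cdot> z2" using c1(4) by simp
      also have "\<dots> = e \<cdot> (k1 \<cdot> z2)" using c1(3) c2(1) E(1) de by (simp add: hom_def assoc)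
      also have "\<dots> = e \<cdot> (p \<cdot> k)" using k by simp
      also have "\<dots> = (e \<cdot> p) \<cdot> k" using k(1) P(1) E(1) de by (simp add: hom_def assoc)
      also have "\<dots> = (e \<cdot> q) \<cdot> k" using E(2) by simp
      also have "\<dots> = e \<cdot> (q \<cdot> k)" using k(1) P(2) E(1) de by (simp add: hom_def assoc)
      also have "\<dots> = (h1 \<cdot> z1) \<cdot> z2" using k c2 by simp
      finally show ?thesis .
    qed
    moreover have "g1 \<cdot> z1 \<in> hom C (Cod C z2) (Cod C e)" "h1 \<cdot> z1 \<in> hom C (Cod C z2) (Cod C e)"
      using c2(1) g1 c1 comp_hom by (simp_all add: hom_def)
    ultimately have "g1 \<cdot> z1 = h1 \<cdot> z1" using regular_epi_epi[OF c2(2)] by blast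
    moreover have "g1 \<in> hom C (Cod C z1) (Cod C e)" "h1 \<in> hom C (Cod C z1) (Cod C e)"
      using c1(1) g1 by (simp_all add: hom_def)
    ultimately show "g1 = h1" using regular_epi_epi[OF c1(2)] by blast
  qed
  moreover have "e \<in> hom C (Dom C g) (Dom C m)" using E m by (simp add: hom_def)
  moreover have "Cod C m = Cod C g" using m hom_cod by blast
  ultimately show ?thesis using re m by blast
qed

end



locale rm = rc +
  assumes maj: "majority_category C"
begin

lemma prod_ex: "A \<in> Obj C \<Longrightarrow> B \<in> Obj C \<Longrightarrow> \<exists>P p1 p2. is_product C A B P p1 p2"
  using maj unfolding majority_category_def has_binary_products_def by blast

lemma prod3_ex:
  assumes "A \<in> Obj C" "B \<in> Obj C" "D \<in> Obj C"
  shows "\<exists>P p1 p2 p3. is_product3 C A B D P p1 p2 p3"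
proof -
  obtain Q q1 q2 where Q: "is_product C B D Q q1 q2" using prod_ex assms by blast
  have "Q \<in> Obj C" using prodD[OF Q] by blast
  then obtain P p1 p2 where P: "is_product C A Q P p1 p2" using prod_ex assms by blast
  show ?thesis using prod3_from_binary[OF Q P] by blast
qed

lemma maj_cover:
  assumes P3: "is_product3 C A B D P p1 p2 p3" and g: "g \<in> hom C E P"
    and x: "x \<in> hom C T A" and y: "y \<in> hom C T B" and z: "z \<in> hom C T D"
    and m1: "\<exists>k. k \<in> hom C T E \<and> p1 \<cdot> (g \<cdot> k) = x \<and> p2 \<cdot> (g \<cdot> k) = y"
    and m2: "\<exists>k. k \<in> hom C T E \<and> p1 \<cdot> (g \<cdot> k) = x \<and> p3 \<cdot> (g \<cdot> k) = z"
    and m3: "\<exists>k. k \<in> hom C T E \<and> p2 \<cdot> (g \<cdot> k) = y \<and> p3 \<cdot> (g \<cdot> k) = z"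
  shows "\<exists>T' t k. t \<in> hom C T' T \<and> regular_epi C t \<and> k \<in> hom C T' E \<and>
     p1 \<cdot> (g \<cdot> k) = x \<cdot> t \<and> p2 \<cdot> (g \<cdot> k) = y \<cdot> t \<and> p3 \<cdot> (g \<cdot> k) = z \<cdot> t"
proof -
  have ga: "g \<in> Arr C" using g hom_arr by blast
  obtain m e where me: "mono C m" "regular_epi C e" "e \<in> hom C (Dom C g) (Dom C m)" "Cod C m = Cod C g" "m \<cdot> e = g"
    using image_ex[OF ga] by blast
  have dg: "Dom C g = E" "Cod C g = P" using g by (simp_all add: hom_def)
  have mh: "m \<in> hom C (Dom C m) P" using me(1,4) dg unfolding mono_def hom_def by auto
  have eh: "e \<in> hom C E (Dom C m)" using me(3) dg by simp
  have P3h: "p1 \<in> hom C P A" "p2 \<in> hom C P B" "p3 \<in> hom C P D" using prod3D[OF P3] by auto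
  have ms: "majority_selecting C A B D p1 p2 p3 m"
    using maj P3 me(1,4) dg unfolding majority_category_def by blast
  have gk: "g \<cdot> k = m \<cdot> (e \<cdot> k)" if "k \<in> hom C T E" for k
    using assoc_hom[OF that eh mh] me(5) by simp
  have mem: "gen_mem3 C p1 p2 p3 m (p1 \<cdot> (g \<cdot> k)) (p2 \<cdot> (g \<cdot> k)) (p3 \<cdot> (g \<cdot> k))" if k: "k \<in> hom C T E" for k
    unfolding gen_mem3_def
  proof (intro exI conjI)
    have "Dom C (p1 \<cdot> (g \<cdot> k)) = T" using comp_hom[OF comp_hom[OF k g] P3h(1)] by (simp add: hom_def)
    then show "e \<cdot> k \<in> hom C (Dom C (p1 \<cdot> (g \<cdot> k))) (Dom C m)" using comp_hom[OF k eh] by simp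
  qed (use gk[OF k] in auto)
  have hz: "\<And>k. k \<in> hom C T E \<Longrightarrow> p1 \<cdot> (g \<cdot> k) \<in> hom C T A \<and> p2 \<cdot> (g \<cdot> k) \<in> hom C T B \<and> p3 \<cdot> (g \<cdot> k) \<in> hom C T D"
    using comp_hom g P3h by blast
  obtain k1 where k1: "k1 \<in> hom C T E" "p1 \<cdot> (g \<cdot> k1) = x" "p2 \<cdot> (g \<cdot> k1) = y" using m1 by blast
  obtain k2 where k2: "k2 \<in> hom C T E" "p1 \<cdot> (g \<cdot> k2) = x" "p3 \<cdot> (g \<cdot> k2) = z" using m2 by blast
  obtain k3 where k3: "k3 \<in> hom C T E" "p2 \<cdot> (g \<cdot> k3) = y" "p3 \<cdot> (g \<cdot> k3) = z" using m3 by blast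
  have G1: "gen_mem3 C p1 p2 p3 m x y (p3 \<cdot> (g \<cdot> k1))" using mem[OF k1(1)] k1 by simp
  have G2: "gen_mem3 C p1 p2 p3 m x (p2 \<cdot> (g \<cdot> k2)) z" using mem[OF k2(1)] k2 by simp
  have G3: "gen_mem3 C p1 p2 p3 m (p1 \<cdot> (g \<cdot> k3)) y z" using mem[OF k3(1)] k3 by simp
  have "gen_mem3 C p1 p2 p3 m x y z"
    using ms[unfolded majority_selecting_def, rule_format, of x T x' y y' z z' for x' y' z'] 
      x y z hz[OF k1(1)] hz[OF k2(1)] hz[OF k3(1)] G1 G2 G3 by blast
  then obtain u where u: "u \<in> hom C T (Dom C m)" "p1 \<cdot> (m \<cdot> u) = x" "p2 \<cdot> (m \<cdot> u) = y" "p3 \<cdot> (m \<cdot> u) = z"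
    unfolding gen_mem3_def using x by (auto simp: hom_def)
  obtain T' k t where c: "t \<in> hom C T' T" "regular_epi C t" "k \<in> hom C T' (Dom C e)" "e \<cdot> k = u \<cdot> t"
    using cover[OF me(2), of u T] u(1) eh by (auto simp: hom_def)
  have kE: "k \<in> hom C T' E" using c(3) eh by (simp add: hom_def)
  have gk': "g \<cdot> k = (m \<cdot> u) \<cdot> t"
  proof -
    have "g \<cdot> k = m \<cdot> (e \<cdot> k)" using assoc_hom[OF kE eh mh] me(5) by simp
    also have "\<dots> = (m \<cdot> u) \<cdot> t" using c(4) assoc_hom[OF c(1) u(1) mh] by simp
    finally show ?thesis .
  qed
  have mu: "m \<cdot> u \<in> hom C T P" using comp_hom[OF u(1) mh] .
  have "p1 \<cdot> (g \<cdot> k) = x \<cdot> t" using gk' assoc_hom[OF c(1) mu P3h(1)] u(2) by simp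
  moreover have "p2 \<cdot> (g \<cdot> k) = y \<cdot> t" using gk' assoc_hom[OF c(1) mu P3h(2)] u(3) by simp
  moreover have "p3 \<cdot> (g \<cdot> k) = z \<cdot> t" using gk' assoc_hom[OF c(1) mu P3h(3)] u(4) by simp
  ultimately show ?thesis using c(1,2) kE by blast
qed

end



context rm
begin

lemma imageD:
  assumes "is_image C g m" "g \<in> hom C A B"
  shows "\<exists>e. regular_epi C e \<and> e \<in> hom C A (Dom C m) \<and> m \<in> hom C (Dom C m) B \<and> m \<cdot> e = g \<and> mono C m"
proof -
  obtain e where e: "regular_epi C e" "Dom C e = Dom C g" "Cod C e = Dom C m" "m \<cdot> e = g" "mono C m"
    using assms(1) unfolding is_image_def by blast
  have "e \<in> Arr C" "m \<in> Arr C" using e regular_epi_arr unfolding mono_def by auto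
  then have "Cod C m = B" using e assms(2) cod_comp[of e m] by (simp add: hom_def)
  then show ?thesis using e assms(2) \<open>e \<in> Arr C\<close> \<open>m \<in> Arr C\<close> by (auto simp: hom_def)
qed

lemma pre:
  assumes "g \<cdot> f = g' \<cdot> f'" "f \<in> hom C A B" "g \<in> hom C B D" "f' \<in> hom C A B'" "g' \<in> hom C B' D"
  shows "x \<in> Arr C \<Longrightarrow> Cod C x = A \<Longrightarrow> g \<cdot> (f \<cdot> x) = g' \<cdot> (f' \<cdot> x)"
proof -
  assume x: "x \<in> Arr C" "Cod C x = A"
  then have xh: "x \<in> hom C (Dom C x) A" by (simp add: hom_def)
  show ?thesis using assoc_hom[OF xh assms(2,3)] assoc_hom[OF xh assms(4,5)] assms(1) by simp
qed

lemma mono_comp_pb: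
  assumes pb: "is_pullback C m n c d" and "mono C m" "mono C n"
  shows "mono C (m \<cdot> c)"
proof -
  have P: "m \<in> Arr C" "n \<in> Arr C" "c \<in> hom C (Dom C c) (Dom C m)" "d \<in> hom C (Dom C c) (Dom C n)"
    "Cod C m = Cod C n" "m \<cdot> c = n \<cdot> d" using pbD[OF pb] by auto
  have mh: "m \<in> hom C (Dom C m) (Cod C m)" "n \<in> hom C (Dom C n) (Cod C m)" using P by (simp_all add: hom_def)
  show ?thesis unfolding mono_def
  proof (intro conjI allI impI)
    show "m \<cdot> c \<in> Arr C" using P by (simp add: hom_def)
    fix g h assume H: "g \<in> Arr C \<and> h \<in> Arr C \<and> Dom C g = Dom C h \<and> Cod C g = Dom C (m \<cdot> c) \<and> Cod C h = Dom C (m \<cdot> c) \<and> (m \<cdot> c) \<cdot> g = (m \<cdot> c) \<cdot> h"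
    have gh: "g \<in> hom C (Dom C g) (Dom C c)" "h \<in> hom C (Dom C g) (Dom C c)" using H P by (auto simp: hom_def)
    have "m \<cdot> (c \<cdot> g) = m \<cdot> (c \<cdot> h)" using H assoc_hom[OF gh(1) P(3) mh(1)] assoc_hom[OF gh(2) P(3) mh(1)] by simp
    then have cg: "c \<cdot> g = c \<cdot> h" using monoD[OF assms(2) comp_hom[OF gh(1) P(3)] comp_hom[OF gh(2) P(3)]] by simp
    have "n \<cdot> (d \<cdot> g) = n \<cdot> (d \<cdot> h)" using H P(6) assoc_hom[OF gh(1) P(4) mh(2)] assoc_hom[OF gh(2) P(4) mh(2)] by simp
    then have dg: "d \<cdot> g = d \<cdot> h" using monoD[OF assms(3) comp_hom[OF gh(1) P(4)] comp_hom[OF gh(2) P(4)]] by simp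
    show "g = h" using pb_uniq[OF pb gh cg dg] .
  qed
qed

end



context rm
begin

lemma main:
  assumes fh: "f \<in> hom C X Y"
    and prP: "is_product C X X P \<pi>1 \<pi>2" and prQ: "is_product C Y Y Q \<rho>1 \<rho>2"
    and ffh: "ff \<in> hom C P Q" and ff1: "Comp C \<rho>1 ff = Comp C f \<pi>1" and ff2: "Comp C \<rho>2 ff = Comp C f \<pi>2"
    and mr: "mono C r" and cr: "Cod C r = P" and rr: "reflexive_rel C X P \<pi>1 \<pi>2 r"
    and ms: "mono C s" and cs: "Cod C s = P" and rs: "reflexive_rel C X P \<pi>1 \<pi>2 s"
    and pbrs: "is_pullback C r s a b"
    and iRS: "is_image C (Comp C ff (Comp C r a)) mRS"
    and iR: "is_image C (Comp C ff r) mR"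
    and iS: "is_image C (Comp C ff s) mS"
    and pbm: "is_pullback C mR mS c d"
  shows "sub_eq C mRS (Comp C mR c)"
proof -
  define R0 where "R0 = Dom C r"
  define S0 where "S0 = Dom C s"
  define D0 where "D0 = Dom C a"
  define W where "W = Dom C c"
  have rh: "r \<in> hom C R0 P" using mr cr unfolding R0_def mono_def hom_def by auto
  have sh: "s \<in> hom C S0 P" using ms cs unfolding S0_def mono_def hom_def by auto
  have PP: "\<pi>1 \<in> hom C P X" "\<pi>2 \<in> hom C P X" "X \<in> Obj C" "P \<in> Obj C" using prodD[OF prP] by auto
  have QQ: "\<rho>1 \<in> hom C Q Y" "\<rho>2 \<in> hom C Q Y" "Y \<in> Obj C" "Q \<in> Obj C" using prodD[OF prQ] by auto
  have ab: "a \<in> hom C D0 R0" "b \<in> hom C D0 S0" "r \<cdot> a = s \<cdot> b"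
    using pbD[OF pbrs] unfolding D0_def R0_def S0_def by (auto simp: hom_def)
  have ra: "ff \<cdot> (r \<cdot> a) \<in> hom C D0 Q" using comp_hom[OF comp_hom[OF ab(1) rh] ffh] .
  obtain eRS where eRS: "regular_epi C eRS" "eRS \<in> hom C D0 (Dom C mRS)" "mRS \<in> hom C (Dom C mRS) Q"
    "mRS \<cdot> eRS = ff \<cdot> (r \<cdot> a)" "mono C mRS"
    using imageD[OF iRS ra] by blast
  obtain eR where eR: "regular_epi C eR" "eR \<in> hom C R0 (Dom C mR)" "mR \<in> hom C (Dom C mR) Q"
    "mR \<cdot> eR = ff \<cdot> r" "mono C mR"
    using imageD[OF iR comp_hom[OF rh ffh]] by blast
  obtain eS where eS: "regular_epi C eS" "eS \<in> hom C S0 (Dom C mS)" "mS \<in> hom C (Dom C mS) Q"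
    "mS \<cdot> eS = ff \<cdot> s" "mono C mS"
    using imageD[OF iS comp_hom[OF sh ffh]] by blast
  have cd: "c \<in> hom C W (Dom C mR)" "d \<in> hom C W (Dom C mS)" "mR \<cdot> c = mS \<cdot> d"
    using pbD[OF pbm] unfolding W_def by (auto simp: hom_def)
  have mc: "mono C (mR \<cdot> c)" using mono_comp_pb[OF pbm eR(5) eS(5)] .
  have mch: "mR \<cdot> c \<in> hom C W Q" using comp_hom[OF cd(1) eR(3)] .
  have le1: "sub_le C mRS (mR \<cdot> c)"
  proof -
    have x1: "eR \<cdot> a \<in> hom C D0 (Dom C mR)" using comp_hom[OF ab(1) eR(2)] .
    have y1: "eS \<cdot> b \<in> hom C D0 (Dom C mS)" using comp_hom[OF ab(2) eS(2)] .
    have "mR \<cdot> (eR \<cdot> a) = ff \<cdot> (r \<cdot> a)"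
      using pre[OF eR(4) eR(2,3) rh ffh] ab(1) by (simp add: hom_def)
    also have "\<dots> = ff \<cdot> (s \<cdot> b)" using ab(3) by simp
    also have "\<dots> = mS \<cdot> (eS \<cdot> b)"
      using pre[OF eS(4) eS(2,3) sh ffh] ab(2) by (simp add: hom_def)
    finally have "mR \<cdot> (eR \<cdot> a) = mS \<cdot> (eS \<cdot> b)" .
    then obtain w where w: "w \<in> hom C D0 (Dom C c)" "c \<cdot> w = eR \<cdot> a" "d \<cdot> w = eS \<cdot> b"
      using pb_elem[OF pbm x1 y1] by blast
    have wW: "w \<in> hom C D0 W" using w W_def by simp
    have "(mR \<cdot> c) \<cdot> w = mRS \<cdot> eRS"
      using assoc_hom[OF wW cd(1) eR(3)] w(2) pre[OF eR(4) eR(2,3) rh ffh] ab(1) eRS(4) by (simp add: hom_def)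
    moreover have "mono C (mR \<cdot> c)" by (rule mc)
    moreover have "mRS \<in> hom C (Dom C mRS) (Cod C (mR \<cdot> c))" using eRS(3) mch by (simp add: hom_def)
    moreover have "w \<in> hom C D0 (Dom C (mR \<cdot> c))" using wW mch by (simp add: hom_def)
    ultimately obtain u where "u \<in> hom C (Dom C mRS) (Dom C (mR \<cdot> c))" "(mR \<cdot> c) \<cdot> u = mRS"
      using descend[OF eRS(1) eRS(2) mc] by blast
    then show ?thesis unfolding sub_le_def using eRS(3) mch by (auto simp: hom_def)
  qed
  have le2: "sub_le C (mR \<cdot> c) mRS"
  proof -
    obtain \<delta> where dl: "\<delta> \<in> hom C X P" "\<pi>1 \<cdot> \<delta> = Id C X" "\<pi>2 \<cdot> \<delta> = Id C X"
      using prod_pair[OF prP id_hom[OF PP(3)] id_hom[OF PP(3)]] by blast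
    obtain \<sigma>r where sr: "\<sigma>r \<in> hom C X R0" "r \<cdot> \<sigma>r = \<delta>"
      using rr dl unfolding reflexive_rel_def R0_def by blast
    obtain \<sigma>s where ss: "\<sigma>s \<in> hom C X S0" "s \<cdot> \<sigma>s = \<delta>"
      using rs dl unfolding reflexive_rel_def S0_def by blast
    have fc1: "f \<cdot> (\<pi>1 \<cdot> z) = \<rho>1 \<cdot> (ff \<cdot> z)" if "z \<in> hom C T P" for z T
      using assoc_hom[OF that PP(1) fh] assoc_hom[OF that ffh QQ(1)] ff1 by simp
    have fc2: "f \<cdot> (\<pi>2 \<cdot> z) = \<rho>2 \<cdot> (ff \<cdot> z)" if "z \<in> hom C T P" for z T
      using assoc_hom[OF that PP(2) fh] assoc_hom[OF that ffh QQ(2)] ff2 by simp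
    have d1: "\<pi>1 \<cdot> (\<delta> \<cdot> x) = x" if "x \<in> hom C T X" for x T
      using assoc_hom[OF that dl(1) PP(1)] dl(2) id_left[OF that] by simp
    have d2: "\<pi>2 \<cdot> (\<delta> \<cdot> x) = x" if "x \<in> hom C T X" for x T
      using assoc_hom[OF that dl(1) PP(2)] dl(3) id_left[OF that] by simp
    have rsr: "r \<cdot> (\<sigma>r \<cdot> x) = \<delta> \<cdot> x" if "x \<in> hom C T X" for x T
      using assoc_hom[OF that sr(1) rh] sr(2) by simp
    have sss: "s \<cdot> (\<sigma>s \<cdot> x) = \<delta> \<cdot> x" if "x \<in> hom C T X" for x T
      using assoc_hom[OF that ss(1) sh] ss(2) by simp
    have df1: "\<rho>1 \<cdot> (ff \<cdot> (\<delta> \<cdot> x)) = f \<cdot> x" if "x \<in> hom C T X" for x T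
      using fc1[OF comp_hom[OF that dl(1)]] d1[OF that] by simp
    have df2: "\<rho>2 \<cdot> (ff \<cdot> (\<delta> \<cdot> x)) = f \<cdot> x" if "x \<in> hom C T X" for x T
      using fc2[OF comp_hom[OF that dl(1)]] d2[OF that] by simp
    obtain T1 k1 t1 where c1: "t1 \<in> hom C T1 W" "regular_epi C t1" "k1 \<in> hom C T1 R0" "eR \<cdot> k1 = c \<cdot> t1"
      using cover[OF eR(1), of c W] cd(1) eR(2) by (auto simp: hom_def)
    have dt1: "d \<cdot> t1 \<in> hom C T1 (Dom C mS)" using comp_hom[OF c1(1) cd(2)] .
    obtain T2 k2 t2 where c2: "t2 \<in> hom C T2 T1" "regular_epi C t2" "k2 \<in> hom C T2 S0" "eS \<cdot> k2 = (d \<cdot> t1) \<cdot> t2"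
      using cover[OF eS(1) , of "d \<cdot> t1" T1] dt1 eS(2) by (auto simp: hom_def)
    define j where "j = k1 \<cdot> t2"
    define tt where "tt = t1 \<cdot> t2"
    define h2 where "h2 = (mR \<cdot> c) \<cdot> tt"
    have jh: "j \<in> hom C T2 R0" unfolding j_def using comp_hom[OF c2(1) c1(3)] .
    have tth: "tt \<in> hom C T2 W" unfolding tt_def using comp_hom[OF c2(1) c1(1)] .
    have h2h: "h2 \<in> hom C T2 Q" unfolding h2_def using comp_hom[OF tth mch] .
    have KA: "ff \<cdot> (r \<cdot> j) = h2"
    proof -
      have "ff \<cdot> (r \<cdot> j) = mR \<cdot> (eR \<cdot> j)" using pre[OF eR(4) eR(2,3) rh ffh] jh by (simp add: hom_def)
      also have "\<dots> = mR \<cdot> ((eR \<cdot> k1) \<cdot> t2)" unfolding j_def using assoc_hom[OF c2(1) c1(3) eR(2)] by simp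
      also have "\<dots> = mR \<cdot> ((c \<cdot> t1) \<cdot> t2)" using c1(4) by simp
      also have "\<dots> = h2" unfolding h2_def tt_def using c2(1) c1(1) cd(1) eR(3) by (simp add: hom_def assoc)
      finally show ?thesis .
    qed
    have KB: "ff \<cdot> (s \<cdot> k2) = h2"
    proof -
      have "ff \<cdot> (s \<cdot> k2) = mS \<cdot> (eS \<cdot> k2)" using pre[OF eS(4) eS(2,3) sh ffh] c2(3) by (simp add: hom_def)
      also have "\<dots> = mS \<cdot> ((d \<cdot> t1) \<cdot> t2)" using c2(4) by simp
      also have "\<dots> = (mS \<cdot> d) \<cdot> tt" unfolding tt_def using c2(1) c1(1) cd(2) eS(3) by (simp add: hom_def assoc)
      also have "\<dots> = h2" unfolding h2_def using cd(3) by simp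
      finally show ?thesis .
    qed
    define xx where "xx = \<pi>1 \<cdot> (r \<cdot> j)"
    define yy where "yy = \<pi>2 \<cdot> (r \<cdot> j)"
    have rj: "r \<cdot> j \<in> hom C T2 P" using comp_hom[OF jh rh] .
    have xxh: "xx \<in> hom C T2 X" unfolding xx_def using comp_hom[OF rj PP(1)] .
    have yyh: "yy \<in> hom C T2 X" unfolding yy_def using comp_hom[OF rj PP(2)] .
    have F1: "f \<cdot> xx = \<rho>1 \<cdot> h2" unfolding xx_def using fc1[OF rj] KA by simp
    have F2: "f \<cdot> yy = \<rho>2 \<cdot> h2" unfolding yy_def using fc2[OF rj] KA by simp
    have p1s: "\<pi>1 \<cdot> s \<in> hom C S0 X" "\<pi>1 \<cdot> r \<in> hom C R0 X" using comp_hom[OF sh PP(1)] comp_hom[OF rh PP(1)] by auto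
    obtain u1 v1 where pb1: "is_pullback C (\<pi>1 \<cdot> s) (\<pi>1 \<cdot> r) u1 v1"
      using pb_ex[of "\<pi>1 \<cdot> s" "\<pi>1 \<cdot> r"] p1s by (auto simp: hom_def)
    define E1 where "E1 = Dom C u1"
    have uv1: "u1 \<in> hom C E1 S0" "v1 \<in> hom C E1 R0" "(\<pi>1 \<cdot> s) \<cdot> u1 = (\<pi>1 \<cdot> r) \<cdot> v1"
      using pbD[OF pb1] p1s unfolding E1_def by (auto simp: hom_def)
    obtain P3 p1 p2 p3 where P3: "is_product3 C Y X Y P3 p1 p2 p3" using prod3_ex QQ(3) PP(3) by blast
    have P3h: "p1 \<in> hom C P3 Y" "p2 \<in> hom C P3 X" "p3 \<in> hom C P3 Y" using prod3D[OF P3] by auto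
    have su1: "s \<cdot> u1 \<in> hom C E1 P" "r \<cdot> v1 \<in> hom C E1 P" using comp_hom[OF uv1(1) sh] comp_hom[OF uv1(2) rh] by auto
    obtain g1 where g1: "g1 \<in> hom C E1 P3" "p1 \<cdot> g1 = \<rho>1 \<cdot> (ff \<cdot> (s \<cdot> u1))" "p2 \<cdot> g1 = \<pi>2 \<cdot> (r \<cdot> v1)"
       "p3 \<cdot> g1 = \<rho>2 \<cdot> (ff \<cdot> (s \<cdot> u1))"
      using prod3_tuple[OF P3 comp_hom[OF comp_hom[OF su1(1) ffh] QQ(1)] comp_hom[OF su1(2) PP(2)]
           comp_hom[OF comp_hom[OF su1(1) ffh] QQ(2)]] by blast
    have g1c: "p1 \<cdot> (g1 \<cdot> k) = \<rho>1 \<cdot> (ff \<cdot> (s \<cdot> (u1 \<cdot> k))) \<and> p2 \<cdot> (g1 \<cdot> k) = \<pi>2 \<cdot> (r \<cdot> (v1 \<cdot> k))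
        \<and> p3 \<cdot> (g1 \<cdot> k) = \<rho>2 \<cdot> (ff \<cdot> (s \<cdot> (u1 \<cdot> k))) \<and> \<pi>1 \<cdot> (s \<cdot> (u1 \<cdot> k)) = \<pi>1 \<cdot> (r \<cdot> (v1 \<cdot> k))"
      if k: "k \<in> hom C T E1" for k T
    proof -
      have "p1 \<cdot> (g1 \<cdot> k) = (p1 \<cdot> g1) \<cdot> k" using assoc_hom[OF k g1(1) P3h(1)] by simp
      also have "\<dots> = \<rho>1 \<cdot> (ff \<cdot> (s \<cdot> (u1 \<cdot> k)))" using g1(2) k uv1(1) sh ffh QQ(1) by (simp add: hom_def assoc)
      finally have A1: "p1 \<cdot> (g1 \<cdot> k) = \<rho>1 \<cdot> (ff \<cdot> (s \<cdot> (u1 \<cdot> k)))" .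
      have "p2 \<cdot> (g1 \<cdot> k) = (p2 \<cdot> g1) \<cdot> k" using assoc_hom[OF k g1(1) P3h(2)] by simp
      also have "\<dots> = \<pi>2 \<cdot> (r \<cdot> (v1 \<cdot> k))" using g1(3) k uv1(2) rh PP(2) by (simp add: hom_def assoc)
      finally have A2: "p2 \<cdot> (g1 \<cdot> k) = \<pi>2 \<cdot> (r \<cdot> (v1 \<cdot> k))" .
      have "p3 \<cdot> (g1 \<cdot> k) = (p3 \<cdot> g1) \<cdot> k" using assoc_hom[OF k g1(1) P3h(3)] by simp
      also have "\<dots> = \<rho>2 \<cdot> (ff \<cdot> (s \<cdot> (u1 \<cdot> k)))" using g1(4) k uv1(1) sh ffh QQ(2) by (simp add: hom_def assoc)
      finally have A3: "p3 \<cdot> (g1 \<cdot> k) = \<rho>2 \<cdot> (ff \<cdot> (s \<cdot> (u1 \<cdot> k)))" .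
      have "\<pi>1 \<cdot> (s \<cdot> (u1 \<cdot> k)) = ((\<pi>1 \<cdot> s) \<cdot> u1) \<cdot> k" using k uv1(1) sh PP(1) by (simp add: hom_def assoc)
      also have "\<dots> = ((\<pi>1 \<cdot> r) \<cdot> v1) \<cdot> k" using uv1(3) by simp
      also have "\<dots> = \<pi>1 \<cdot> (r \<cdot> (v1 \<cdot> k))" using k uv1(2) rh PP(1) by (simp add: hom_def assoc)
      finally show ?thesis using A1 A2 A3 by simp
    qed
    have E1el: "\<exists>k. k \<in> hom C T E1 \<and> u1 \<cdot> k = \<alpha> \<and> v1 \<cdot> k = \<beta>"
      if "\<alpha> \<in> hom C T S0" "\<beta> \<in> hom C T R0" "\<pi>1 \<cdot> (s \<cdot> \<alpha>) = \<pi>1 \<cdot> (r \<cdot> \<beta>)" for \<alpha> \<beta> T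
    proof -
      have "(\<pi>1 \<cdot> s) \<cdot> \<alpha> = (\<pi>1 \<cdot> r) \<cdot> \<beta>" using that sh rh PP(1) by (simp add: hom_def assoc)
      moreover have "\<alpha> \<in> hom C T (Dom C (\<pi>1 \<cdot> s))" "\<beta> \<in> hom C T (Dom C (\<pi>1 \<cdot> r))" using that p1s by (simp_all add: hom_def)
      ultimately show ?thesis using pb_elem[OF pb1] unfolding E1_def by blast
    qed
    have E1mem: "\<exists>k. k \<in> hom C T E1 \<and> p1 \<cdot> (g1 \<cdot> k) = \<rho>1 \<cdot> (ff \<cdot> (s \<cdot> \<alpha>)) \<and> p2 \<cdot> (g1 \<cdot> k) = \<pi>2 \<cdot> (r \<cdot> \<beta>)
        \<and> p3 \<cdot> (g1 \<cdot> k) = \<rho>2 \<cdot> (ff \<cdot> (s \<cdot> \<alpha>))"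
      if hh: "\<alpha> \<in> hom C T S0" "\<beta> \<in> hom C T R0" "\<pi>1 \<cdot> (s \<cdot> \<alpha>) = \<pi>1 \<cdot> (r \<cdot> \<beta>)" for \<alpha> \<beta> T
    proof -
      obtain k where k: "k \<in> hom C T E1" "u1 \<cdot> k = \<alpha>" "v1 \<cdot> k = \<beta>" using E1el[OF hh] by blast
      show ?thesis using g1c[OF k(1)] k by auto
    qed
    have y1h: "\<rho>1 \<cdot> h2 \<in> hom C T2 Y" "\<rho>2 \<cdot> h2 \<in> hom C T2 Y" using comp_hom[OF h2h QQ(1)] comp_hom[OF h2h QQ(2)] by auto
    have M1: "\<exists>k. k \<in> hom C T2 E1 \<and> p1 \<cdot> (g1 \<cdot> k) = \<rho>1 \<cdot> h2 \<and> p2 \<cdot> (g1 \<cdot> k) = yy"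
    proof -
      have a: "\<sigma>s \<cdot> xx \<in> hom C T2 S0" using comp_hom[OF xxh ss(1)] .
      have "\<pi>1 \<cdot> (s \<cdot> (\<sigma>s \<cdot> xx)) = \<pi>1 \<cdot> (r \<cdot> j)" using sss[OF xxh] d1[OF xxh] xx_def by simp
      then obtain k where "k \<in> hom C T2 E1" "p1 \<cdot> (g1 \<cdot> k) = \<rho>1 \<cdot> (ff \<cdot> (s \<cdot> (\<sigma>s \<cdot> xx)))" "p2 \<cdot> (g1 \<cdot> k) = \<pi>2 \<cdot> (r \<cdot> j)"
        using E1mem[OF a jh] by blast
      moreover have "\<rho>1 \<cdot> (ff \<cdot> (s \<cdot> (\<sigma>s \<cdot> xx))) = \<rho>1 \<cdot> h2" using sss[OF xxh] df1[OF xxh] F1 by simp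
      ultimately show ?thesis unfolding yy_def by auto
    qed
    have M2: "\<exists>k. k \<in> hom C T2 E1 \<and> p1 \<cdot> (g1 \<cdot> k) = \<rho>1 \<cdot> h2 \<and> p3 \<cdot> (g1 \<cdot> k) = \<rho>2 \<cdot> h2"
    proof -
      define a' where "a' = \<pi>1 \<cdot> (s \<cdot> k2)"
      have a'h: "a' \<in> hom C T2 X" unfolding a'_def using comp_hom[OF comp_hom[OF c2(3) sh] PP(1)] .
      have b: "\<sigma>r \<cdot> a' \<in> hom C T2 R0" using comp_hom[OF a'h sr(1)] .
      have "\<pi>1 \<cdot> (s \<cdot> k2) = \<pi>1 \<cdot> (r \<cdot> (\<sigma>r \<cdot> a'))" using rsr[OF a'h] d1[OF a'h] a'_def by simp
      then obtain k where "k \<in> hom C T2 E1" "p1 \<cdot> (g1 \<cdot> k) = \<rho>1 \<cdot> (ff \<cdot> (s \<cdot> k2))" "p3 \<cdot> (g1 \<cdot> k) = \<rho>2 \<cdot> (ff \<cdot> (s \<cdot> k2))"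
        using E1mem[OF c2(3) b] by blast
      then show ?thesis using KB by auto
    qed
    have M3: "\<exists>k. k \<in> hom C T2 E1 \<and> p2 \<cdot> (g1 \<cdot> k) = yy \<and> p3 \<cdot> (g1 \<cdot> k) = \<rho>2 \<cdot> h2"
    proof -
      have a: "\<sigma>s \<cdot> yy \<in> hom C T2 S0" using comp_hom[OF yyh ss(1)] .
      have b: "\<sigma>r \<cdot> yy \<in> hom C T2 R0" using comp_hom[OF yyh sr(1)] .
      have "\<pi>1 \<cdot> (s \<cdot> (\<sigma>s \<cdot> yy)) = \<pi>1 \<cdot> (r \<cdot> (\<sigma>r \<cdot> yy))" using sss[OF yyh] rsr[OF yyh] by simp
      then obtain k where "k \<in> hom C T2 E1" "p2 \<cdot> (g1 \<cdot> k) = \<pi>2 \<cdot> (r \<cdot> (\<sigma>r \<cdot> yy))" "p3 \<cdot> (g1 \<cdot> k) = \<rho>2 \<cdot> (ff \<cdot> (s \<cdot> (\<sigma>s \<cdot> yy)))"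
        using E1mem[OF a b] by blast
      moreover have "\<pi>2 \<cdot> (r \<cdot> (\<sigma>r \<cdot> yy)) = yy" using rsr[OF yyh] d2[OF yyh] by simp
      moreover have "\<rho>2 \<cdot> (ff \<cdot> (s \<cdot> (\<sigma>s \<cdot> yy))) = \<rho>2 \<cdot> h2" using sss[OF yyh] df2[OF yyh] F2 by simp
      ultimately show ?thesis by auto
    qed
    obtain T3 t3 k3 where c3: "t3 \<in> hom C T3 T2" "regular_epi C t3" "k3 \<in> hom C T3 E1"
      "p1 \<cdot> (g1 \<cdot> k3) = (\<rho>1 \<cdot> h2) \<cdot> t3" "p2 \<cdot> (g1 \<cdot> k3) = yy \<cdot> t3" "p3 \<cdot> (g1 \<cdot> k3) = (\<rho>2 \<cdot> h2) \<cdot> t3"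
      using maj_cover[OF P3 g1(1) y1h(1) yyh y1h(2) M1 M2 M3] by blast
    define \<alpha>3 where "\<alpha>3 = u1 \<cdot> k3"
    define \<beta>3 where "\<beta>3 = v1 \<cdot> k3"
    have a3h: "\<alpha>3 \<in> hom C T3 S0" "\<beta>3 \<in> hom C T3 R0" unfolding \<alpha>3_def \<beta>3_def
      using comp_hom[OF c3(3) uv1(1)] comp_hom[OF c3(3) uv1(2)] by auto
    have C1: "\<rho>1 \<cdot> (ff \<cdot> (s \<cdot> \<alpha>3)) = (\<rho>1 \<cdot> h2) \<cdot> t3" using g1c[OF c3(3)] c3(4) \<alpha>3_def by simp
    have C2: "\<pi>2 \<cdot> (r \<cdot> \<beta>3) = yy \<cdot> t3" using g1c[OF c3(3)] c3(5) \<beta>3_def by simp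
    have C3: "\<rho>2 \<cdot> (ff \<cdot> (s \<cdot> \<alpha>3)) = (\<rho>2 \<cdot> h2) \<cdot> t3" using g1c[OF c3(3)] c3(6) \<alpha>3_def by simp
    have C0: "\<pi>1 \<cdot> (s \<cdot> \<alpha>3) = \<pi>1 \<cdot> (r \<cdot> \<beta>3)" using g1c[OF c3(3)] \<alpha>3_def \<beta>3_def by simp
    define cc where "cc = \<pi>1 \<cdot> (s \<cdot> \<alpha>3)"
    define dd where "dd = \<pi>2 \<cdot> (s \<cdot> \<alpha>3)"
    have sa3: "s \<cdot> \<alpha>3 \<in> hom C T3 P" using comp_hom[OF a3h(1) sh] .
    have rb3: "r \<cdot> \<beta>3 \<in> hom C T3 P" using comp_hom[OF a3h(2) rh] .
    have cch: "cc \<in> hom C T3 X" unfolding cc_def using comp_hom[OF sa3 PP(1)] .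
    have ddh: "dd \<in> hom C T3 X" unfolding dd_def using comp_hom[OF sa3 PP(2)] .
    have yt3: "yy \<cdot> t3 \<in> hom C T3 X" using comp_hom[OF c3(1) yyh] .
    have z3: "(\<rho>2 \<cdot> h2) \<cdot> t3 \<in> hom C T3 Y" using comp_hom[OF c3(1) y1h(2)] .
    have p2r: "\<pi>2 \<cdot> r \<in> hom C R0 X" "\<pi>2 \<cdot> s \<in> hom C S0 X" using comp_hom[OF rh PP(2)] comp_hom[OF sh PP(2)] by auto
    obtain u2 v2 where pb2: "is_pullback C (\<pi>2 \<cdot> r) (\<pi>2 \<cdot> s) u2 v2"
      using pb_ex[of "\<pi>2 \<cdot> r" "\<pi>2 \<cdot> s"] p2r by (auto simp: hom_def)
    define E2 where "E2 = Dom C u2"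
    have uv2: "u2 \<in> hom C E2 R0" "v2 \<in> hom C E2 S0" "(\<pi>2 \<cdot> r) \<cdot> u2 = (\<pi>2 \<cdot> s) \<cdot> v2"
      using pbD[OF pb2] p2r unfolding E2_def by (auto simp: hom_def)
    obtain P3' q1 q2 q3 where P3': "is_product3 C X X Y P3' q1 q2 q3" using prod3_ex QQ(3) PP(3) by blast
    have P3'h: "q1 \<in> hom C P3' X" "q2 \<in> hom C P3' X" "q3 \<in> hom C P3' Y" using prod3D[OF P3'] by auto
    have ru2: "r \<cdot> u2 \<in> hom C E2 P" "s \<cdot> v2 \<in> hom C E2 P" using comp_hom[OF uv2(1) rh] comp_hom[OF uv2(2) sh] by auto
    obtain g2 where g2: "g2 \<in> hom C E2 P3'" "q1 \<cdot> g2 = \<pi>1 \<cdot> (r \<cdot> u2)" "q2 \<cdot> g2 = \<pi>1 \<cdot> (s \<cdot> v2)"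
       "q3 \<cdot> g2 = \<rho>2 \<cdot> (ff \<cdot> (r \<cdot> u2))"
      using prod3_tuple[OF P3' comp_hom[OF ru2(1) PP(1)] comp_hom[OF ru2(2) PP(1)]
           comp_hom[OF comp_hom[OF ru2(1) ffh] QQ(2)]] by blast
    have g2c: "q1 \<cdot> (g2 \<cdot> k) = \<pi>1 \<cdot> (r \<cdot> (u2 \<cdot> k)) \<and> q2 \<cdot> (g2 \<cdot> k) = \<pi>1 \<cdot> (s \<cdot> (v2 \<cdot> k))
        \<and> q3 \<cdot> (g2 \<cdot> k) = \<rho>2 \<cdot> (ff \<cdot> (r \<cdot> (u2 \<cdot> k))) \<and> \<pi>2 \<cdot> (r \<cdot> (u2 \<cdot> k)) = \<pi>2 \<cdot> (s \<cdot> (v2 \<cdot> k))"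
      if k: "k \<in> hom C T E2" for k T
    proof -
      have "q1 \<cdot> (g2 \<cdot> k) = (q1 \<cdot> g2) \<cdot> k" using assoc_hom[OF k g2(1) P3'h(1)] by simp
      also have "\<dots> = \<pi>1 \<cdot> (r \<cdot> (u2 \<cdot> k))" using g2(2) k uv2(1) rh PP(1) by (simp add: hom_def assoc)
      finally have A1: "q1 \<cdot> (g2 \<cdot> k) = \<pi>1 \<cdot> (r \<cdot> (u2 \<cdot> k))" .
      have "q2 \<cdot> (g2 \<cdot> k) = (q2 \<cdot> g2) \<cdot> k" using assoc_hom[OF k g2(1) P3'h(2)] by simp
      also have "\<dots> = \<pi>1 \<cdot> (s \<cdot> (v2 \<cdot> k))" using g2(3) k uv2(2) sh PP(1) by (simp add: hom_def assoc)
      finally have A2: "q2 \<cdot> (g2 \<cdot> k) = \<pi>1 \<cdot> (s \<cdot> (v2 \<cdot> k))" .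
      have "q3 \<cdot> (g2 \<cdot> k) = (q3 \<cdot> g2) \<cdot> k" using assoc_hom[OF k g2(1) P3'h(3)] by simp
      also have "\<dots> = \<rho>2 \<cdot> (ff \<cdot> (r \<cdot> (u2 \<cdot> k)))" using g2(4) k uv2(1) rh ffh QQ(2) by (simp add: hom_def assoc)
      finally have A3: "q3 \<cdot> (g2 \<cdot> k) = \<rho>2 \<cdot> (ff \<cdot> (r \<cdot> (u2 \<cdot> k)))" .
      have "\<pi>2 \<cdot> (r \<cdot> (u2 \<cdot> k)) = ((\<pi>2 \<cdot> r) \<cdot> u2) \<cdot> k" using k uv2(1) rh PP(2) by (simp add: hom_def assoc)
      also have "\<dots> = ((\<pi>2 \<cdot> s) \<cdot> v2) \<cdot> k" using uv2(3) by simp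
      also have "\<dots> = \<pi>2 \<cdot> (s \<cdot> (v2 \<cdot> k))" using k uv2(2) sh PP(2) by (simp add: hom_def assoc)
      finally show ?thesis using A1 A2 A3 by simp
    qed
    have E2mem: "\<exists>k. k \<in> hom C T E2 \<and> q1 \<cdot> (g2 \<cdot> k) = \<pi>1 \<cdot> (r \<cdot> \<alpha>) \<and> q2 \<cdot> (g2 \<cdot> k) = \<pi>1 \<cdot> (s \<cdot> \<beta>)
        \<and> q3 \<cdot> (g2 \<cdot> k) = \<rho>2 \<cdot> (ff \<cdot> (r \<cdot> \<alpha>))"
      if hh: "\<alpha> \<in> hom C T R0" "\<beta> \<in> hom C T S0" "\<pi>2 \<cdot> (r \<cdot> \<alpha>) = \<pi>2 \<cdot> (s \<cdot> \<beta>)" for \<alpha> \<beta> T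
    proof -
      have "(\<pi>2 \<cdot> r) \<cdot> \<alpha> = (\<pi>2 \<cdot> s) \<cdot> \<beta>" using hh sh rh PP(2) by (simp add: hom_def assoc)
      moreover have "\<alpha> \<in> hom C T (Dom C (\<pi>2 \<cdot> r))" "\<beta> \<in> hom C T (Dom C (\<pi>2 \<cdot> s))" using hh p2r by (simp_all add: hom_def)
      ultimately obtain k where k: "k \<in> hom C T E2" "u2 \<cdot> k = \<alpha>" "v2 \<cdot> k = \<beta>"
        using pb_elem[OF pb2] unfolding E2_def by blast
      show ?thesis using g2c[OF k(1)] k by auto
    qed
    have N1: "\<exists>k. k \<in> hom C T3 E2 \<and> q1 \<cdot> (g2 \<cdot> k) = cc \<and> q2 \<cdot> (g2 \<cdot> k) = cc"
    proof -
      have a: "\<sigma>r \<cdot> cc \<in> hom C T3 R0" "\<sigma>s \<cdot> cc \<in> hom C T3 S0" using comp_hom[OF cch sr(1)] comp_hom[OF cch ss(1)] by auto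
      have "\<pi>2 \<cdot> (r \<cdot> (\<sigma>r \<cdot> cc)) = \<pi>2 \<cdot> (s \<cdot> (\<sigma>s \<cdot> cc))" using rsr[OF cch] sss[OF cch] by simp
      then obtain k where "k \<in> hom C T3 E2" "q1 \<cdot> (g2 \<cdot> k) = \<pi>1 \<cdot> (r \<cdot> (\<sigma>r \<cdot> cc))" "q2 \<cdot> (g2 \<cdot> k) = \<pi>1 \<cdot> (s \<cdot> (\<sigma>s \<cdot> cc))"
        using E2mem[OF a] by blast
      then show ?thesis using rsr[OF cch] sss[OF cch] d1[OF cch] by auto
    qed
    have fyy: "f \<cdot> (yy \<cdot> t3) = (\<rho>2 \<cdot> h2) \<cdot> t3" using assoc_hom[OF c3(1) yyh fh] F2 by simp
    have N2: "\<exists>k. k \<in> hom C T3 E2 \<and> q1 \<cdot> (g2 \<cdot> k) = cc \<and> q3 \<cdot> (g2 \<cdot> k) = (\<rho>2 \<cdot> h2) \<cdot> t3"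
    proof -
      have a: "\<sigma>s \<cdot> (yy \<cdot> t3) \<in> hom C T3 S0" using comp_hom[OF yt3 ss(1)] .
      have "\<pi>2 \<cdot> (r \<cdot> \<beta>3) = \<pi>2 \<cdot> (s \<cdot> (\<sigma>s \<cdot> (yy \<cdot> t3)))" using sss[OF yt3] d2[OF yt3] C2 by simp
      then obtain k where "k \<in> hom C T3 E2" "q1 \<cdot> (g2 \<cdot> k) = \<pi>1 \<cdot> (r \<cdot> \<beta>3)" "q3 \<cdot> (g2 \<cdot> k) = \<rho>2 \<cdot> (ff \<cdot> (r \<cdot> \<beta>3))"
        using E2mem[OF a3h(2) a] by blast
      moreover have "\<rho>2 \<cdot> (ff \<cdot> (r \<cdot> \<beta>3)) = (\<rho>2 \<cdot> h2) \<cdot> t3" using fc2[OF rb3] C2 fyy by simp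
      ultimately show ?thesis using C0 cc_def by auto
    qed
    have N3: "\<exists>k. k \<in> hom C T3 E2 \<and> q2 \<cdot> (g2 \<cdot> k) = cc \<and> q3 \<cdot> (g2 \<cdot> k) = (\<rho>2 \<cdot> h2) \<cdot> t3"
    proof -
      have a: "\<sigma>r \<cdot> dd \<in> hom C T3 R0" using comp_hom[OF ddh sr(1)] .
      have "\<pi>2 \<cdot> (r \<cdot> (\<sigma>r \<cdot> dd)) = \<pi>2 \<cdot> (s \<cdot> \<alpha>3)" using rsr[OF ddh] d2[OF ddh] dd_def by simp
      then obtain k where "k \<in> hom C T3 E2" "q2 \<cdot> (g2 \<cdot> k) = \<pi>1 \<cdot> (s \<cdot> \<alpha>3)" "q3 \<cdot> (g2 \<cdot> k) = \<rho>2 \<cdot> (ff \<cdot> (r \<cdot> (\<sigma>r \<cdot> dd)))"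
        using E2mem[OF a a3h(1)] by blast
      moreover have "\<rho>2 \<cdot> (ff \<cdot> (r \<cdot> (\<sigma>r \<cdot> dd))) = (\<rho>2 \<cdot> h2) \<cdot> t3"
        using rsr[OF ddh] df2[OF ddh] fc2[OF sa3] C3 dd_def by simp
      ultimately show ?thesis using cc_def by auto
    qed
    obtain T4 t4 k4 where c4: "t4 \<in> hom C T4 T3" "regular_epi C t4" "k4 \<in> hom C T4 E2"
      "q1 \<cdot> (g2 \<cdot> k4) = cc \<cdot> t4" "q2 \<cdot> (g2 \<cdot> k4) = cc \<cdot> t4" "q3 \<cdot> (g2 \<cdot> k4) = ((\<rho>2 \<cdot> h2) \<cdot> t3) \<cdot> t4"
      using maj_cover[OF P3' g2(1) cch cch z3 N1 N2 N3] by blast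
    define \<alpha>4 where "\<alpha>4 = u2 \<cdot> k4"
    define \<beta>4 where "\<beta>4 = v2 \<cdot> k4"
    have a4h: "\<alpha>4 \<in> hom C T4 R0" "\<beta>4 \<in> hom C T4 S0" unfolding \<alpha>4_def \<beta>4_def
      using comp_hom[OF c4(3) uv2(1)] comp_hom[OF c4(3) uv2(2)] by auto
    have ra4: "r \<cdot> \<alpha>4 \<in> hom C T4 P" "s \<cdot> \<beta>4 \<in> hom C T4 P" using comp_hom[OF a4h(1) rh] comp_hom[OF a4h(2) sh] by auto
    have G1: "\<pi>1 \<cdot> (r \<cdot> \<alpha>4) = cc \<cdot> t4" using g2c[OF c4(3)] c4(4) \<alpha>4_def by simp
    have G2: "\<pi>1 \<cdot> (s \<cdot> \<beta>4) = cc \<cdot> t4" using g2c[OF c4(3)] c4(5) \<beta>4_def by simp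
    have G3: "\<rho>2 \<cdot> (ff \<cdot> (r \<cdot> \<alpha>4)) = ((\<rho>2 \<cdot> h2) \<cdot> t3) \<cdot> t4" using g2c[OF c4(3)] c4(6) \<alpha>4_def by simp
    have G0: "\<pi>2 \<cdot> (r \<cdot> \<alpha>4) = \<pi>2 \<cdot> (s \<cdot> \<beta>4)" using g2c[OF c4(3)] \<alpha>4_def \<beta>4_def by simp
    have rs4: "r \<cdot> \<alpha>4 = s \<cdot> \<beta>4" using prod_ext[OF prP ra4 G1[folded G2] G0] .
    obtain z where z: "z \<in> hom C T4 D0" "a \<cdot> z = \<alpha>4" "b \<cdot> z = \<beta>4"
      using pb_elem[OF pbrs, of \<alpha>4 T4 \<beta>4] a4h rs4 unfolding D0_def R0_def S0_def by auto
    define H4 where "H4 = (h2 \<cdot> t3) \<cdot> t4"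
    have ht3: "h2 \<cdot> t3 \<in> hom C T3 Q" using comp_hom[OF c3(1) h2h] .
    have H4h: "H4 \<in> hom C T4 Q" unfolding H4_def using comp_hom[OF c4(1) ht3] .
    have fr4: "ff \<cdot> (r \<cdot> \<alpha>4) \<in> hom C T4 Q" using comp_hom[OF ra4(1) ffh] .
    have "ff \<cdot> (r \<cdot> \<alpha>4) = H4"
    proof (rule prod_ext[OF prQ fr4 H4h])
      have "\<rho>1 \<cdot> (ff \<cdot> (r \<cdot> \<alpha>4)) = f \<cdot> (cc \<cdot> t4)" using fc1[OF ra4(1)] G1 by simp
      also have "\<dots> = (f \<cdot> cc) \<cdot> t4" using assoc_hom[OF c4(1) cch fh] by simp
      also have "\<dots> = ((\<rho>1 \<cdot> h2) \<cdot> t3) \<cdot> t4" using fc1[OF sa3] C1 cc_def by simp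
      also have "\<dots> = \<rho>1 \<cdot> H4" unfolding H4_def using c4(1) c3(1) h2h QQ(1) by (simp add: hom_def assoc)
      finally show "\<rho>1 \<cdot> (ff \<cdot> (r \<cdot> \<alpha>4)) = \<rho>1 \<cdot> H4" .
      have "\<rho>2 \<cdot> (ff \<cdot> (r \<cdot> \<alpha>4)) = ((\<rho>2 \<cdot> h2) \<cdot> t3) \<cdot> t4" using G3 .
      also have "\<dots> = \<rho>2 \<cdot> H4" unfolding H4_def using c4(1) c3(1) h2h QQ(2) by (simp add: hom_def assoc)
      finally show "\<rho>2 \<cdot> (ff \<cdot> (r \<cdot> \<alpha>4)) = \<rho>2 \<cdot> H4" .
    qed
    moreover have "mRS \<cdot> (eRS \<cdot> z) = ff \<cdot> (r \<cdot> \<alpha>4)"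
    proof -
      have "mRS \<cdot> (eRS \<cdot> z) = (mRS \<cdot> eRS) \<cdot> z" using assoc_hom[OF z(1) eRS(2,3)] by simp
      also have "\<dots> = (ff \<cdot> (r \<cdot> a)) \<cdot> z" using eRS(4) by simp
      also have "\<dots> = ff \<cdot> (r \<cdot> (a \<cdot> z))" using z(1) ab(1) rh ffh by (simp add: hom_def assoc)
      finally show ?thesis using z(2) by simp
    qed
    ultimately have e4: "mRS \<cdot> (eRS \<cdot> z) = (h2 \<cdot> t3) \<cdot> t4" unfolding H4_def by simp
    have v4: "eRS \<cdot> z \<in> hom C T4 (Dom C mRS)" using comp_hom[OF z(1) eRS(2)] .
    have cQ: "Cod C mRS = Q" using eRS(3) by (simp add: hom_def)
    obtain v3 where v3: "v3 \<in> hom C T3 (Dom C mRS)" "mRS \<cdot> v3 = h2 \<cdot> t3"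
      using descend[OF c4(2) c4(1) eRS(5), of "h2 \<cdot> t3"] ht3 cQ v4 e4 by auto
    obtain v2' where v2': "v2' \<in> hom C T2 (Dom C mRS)" "mRS \<cdot> v2' = h2"
      using descend[OF c3(2) c3(1) eRS(5), of h2] h2h cQ v3 by auto
    have h1h: "(mR \<cdot> c) \<cdot> t1 \<in> hom C T1 Q" using comp_hom[OF c1(1) mch] .
    have "h2 = ((mR \<cdot> c) \<cdot> t1) \<cdot> t2" unfolding h2_def tt_def using assoc_hom[OF c2(1) c1(1) mch] by simp
    then obtain v1' where v1': "v1' \<in> hom C T1 (Dom C mRS)" "mRS \<cdot> v1' = (mR \<cdot> c) \<cdot> t1"
      using descend[OF c2(2) c2(1) eRS(5), of "(mR \<cdot> c) \<cdot> t1"] h1h cQ v2' by auto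
    obtain v0 where v0: "v0 \<in> hom C W (Dom C mRS)" "mRS \<cdot> v0 = mR \<cdot> c"
      using descend[OF c1(2) c1(1) eRS(5), of "mR \<cdot> c"] mch cQ v1' by auto
    show ?thesis unfolding sub_le_def using v0 mch eRS(3) by (auto simp: hom_def)
  qed
  show ?thesis unfolding sub_eq_def using le1 le2 by simp
qed

end


theorem corollary3p5:
  fixes C :: "('o, 'a) category"
  assumes "regular_category C" and "majority_category C"
    and "f \<in> hom C X Y" and "regular_epi C f"
    and "is_product C X X P \<pi>1 \<pi>2" and "is_product C Y Y Q \<rho>1 \<rho>2"
    and "ff \<in> hom C P Q" and "Comp C \<rho>1 ff = Comp C f \<pi>1" and "Comp C \<rho>2 ff = Comp C f \<pi>2"
    and "mono C r" and "Cod C r = P" and "reflexive_rel C X P \<pi>1 \<pi>2 r"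
    and "mono C s" and "Cod C s = P" and "reflexive_rel C X P \<pi>1 \<pi>2 s"
    and "is_pullback C r s a b"
    and "is_image C (Comp C ff (Comp C r a)) mRS"
    and "is_image C (Comp C ff r) mR"
    and "is_image C (Comp C ff s) mS"
    and "is_pullback C mR mS c d"
  shows "sub_eq C mRS (Comp C mR c)"
proof -
  interpret rm C
    by unfold_locales (use assms(1,2) in \<open>auto simp: regular_category_def\<close>)
  show ?thesis
    using main[OF assms(3) assms(5-20)] .
qed

end
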